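(* There is no binary self-orthogonal $[72,7,34]$ code.
   Context: A binary linear code $C$ is self-orthogonal if $C\subseteq C^\perp$. *)

theory Defs
  imports "HOL-Analysis.Analysis" "HOL-Library.Z2" "HOL-Library.Numeral_Type"
begin

definition bdot :: "bit ^ 'n \<Rightarrow> bit ^ 'n \<Rightarrow> bit" where
  "bdot x y = (\<Sum>i\<in>UNIV. x $ i * y $ i)"

definition binary_linear_code :: "(bit ^ 'n) set \<Rightarrow> bool" where
  "binary_linear_code C \<longleftrightarrow> vec.subspace C"

definition dual_code :: "(bit ^ 'n) set \<Rightarrow> (bit ^ 'n) set" where
  "dual_code C = {y. \<forall>x\<in>C. bdot x y = 0}"

definition self_orthogonal :: "(bit ^ 'n) set \<Rightarrow> bool" where
  "self_orthogonal C \<longleftrightarrow> C \<subseteq> dual_code C"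

definition hamming_dist :: "bit ^ 'n \<Rightarrow> bit ^ 'n \<Rightarrow> nat" where
  "hamming_dist x y = card {i. x $ i \<noteq> y $ i}"

definition min_dist :: "(bit ^ 'n) set \<Rightarrow> nat" where
  "min_dist C = Min {hamming_dist x y | x y. x \<in> C \<and> y \<in> C \<and> x \<noteq> y}"

definition is_nkd_code :: "(bit ^ 'n) set \<Rightarrow> nat \<Rightarrow> nat \<Rightarrow> nat \<Rightarrow> bool" where
  "is_nkd_code C n k d \<longleftrightarrow> binary_linear_code C \<and> CARD('n) = n \<and> vec.dim C = k
     \<and> min_dist C = d"

end

theory Submission imports Defs begin

lemma bit_of_nat: "(of_nat n :: bit) = (if even n then 0 else 1)"
  by (induction n) auto

lemma bit_sum_card:
  assumes "finite A"
  shows "(\<Sum>i\<in>A. f i :: bit) = of_nat (card {i\<in>A. f i = 1})"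
  using assms
proof (induction A rule: finite_induct)
  case empty then show ?case by simp
next
  case (insert a A)
  have fin: "finite {i\<in>A. f i = 1}" using insert by simp
  show ?case
  proof (cases "f a = 1")
    case True
    then have "{i\<in>insert a A. f i = 1} = insert a {i\<in>A. f i = 1}" by auto
    then show ?thesis using insert True fin by simp
  next
    case False
    then have "{i\<in>insert a A. f i = 1} = {i\<in>A. f i = 1}" by auto
    then show ?thesis using insert False by simp
  qed
qed

definition wt :: "'n set \<Rightarrow> bit ^ 'n \<Rightarrow> nat" where
  "wt S x = card {i\<in>S. x $ i \<noteq> 0}"

fun griesmer :: "nat \<Rightarrow> nat \<Rightarrow> nat" where
  "griesmer 0 d = 0"
| "griesmer (Suc k) d = d + griesmer k ((d + 1) div 2)"

lemma bitvec_add_self: "x + x = (0::bit^'n)"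
  by (simp add: vec_eq_iff)

lemma bitvec_add_eq_0: "x + y = (0::bit^'n) \<longleftrightarrow> x = y"
  by (metis add.assoc add.right_neutral bitvec_add_self)

lemma split_wt:
  fixes x c :: "bit ^ 'n :: finite"
  shows "wt S x + wt S (x + c) = 2 * wt {i\<in>S. c $ i = 0} x + wt S c"
proof -
  let ?S0 = "{i\<in>S. c $ i = 0}"
  let ?A = "{i\<in>S. c $ i = 0 \<and> x $ i = 1}"
  let ?B = "{i\<in>S. c $ i = 1 \<and> x $ i = 1}"
  let ?E = "{i\<in>S. c $ i = 1 \<and> x $ i = 0}"
  have f: "finite X" for X :: "'n set" by simp
  have 1: "{i\<in>S. x $ i \<noteq> 0} = ?A \<union> ?B" by auto
  have 2: "{i\<in>S. (x + c) $ i \<noteq> 0} = ?A \<union> ?E" by auto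
  have 3: "{i\<in>?S0. x $ i \<noteq> 0} = ?A" by auto
  have 4: "{i\<in>S. c $ i \<noteq> 0} = ?B \<union> ?E" by auto
  have "card (?A \<union> ?B) = card ?A + card ?B" by (rule card_Un_disjoint) auto
  moreover have "card (?A \<union> ?E) = card ?A + card ?E" by (rule card_Un_disjoint) auto
  moreover have "card (?B \<union> ?E) = card ?B + card ?E" by (rule card_Un_disjoint) auto
  ultimately show ?thesis unfolding wt_def 1 2 3 4 by simp
qed

lemma griesmer_bound:
  fixes D :: "(bit ^ 'n :: finite) set"
  assumes "vec.subspace D" "vec.dim D \<ge> k"
    and "\<And>x. x \<in> D \<Longrightarrow> x \<noteq> 0 \<Longrightarrow> wt S x \<ge> d"
  shows "card S \<ge> griesmer k d"
  using assms
proof (induction k arbitrary: D S d)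
  case 0 then show ?case by simp
next
  case (Suc k)
  have "D \<noteq> {0}"
  proof
    assume "D = {0}"
    then have "vec.dim D = 0" using vec.dim_span_eq_card_independent[of "{}"] by (simp add: vec.span_empty)
    with Suc.prems(2) show False by linarith
  qed
  then obtain y where y: "y \<in> D" "y \<noteq> 0" using vec.subspace_0[OF Suc.prems(1)] by blast
  then have "\<exists>m. \<exists>c\<in>D. c \<noteq> 0 \<and> wt S c = m" by blast
  from exists_least_iff[THEN iffD1, OF this] obtain m where
    m: "\<exists>c\<in>D. c \<noteq> 0 \<and> wt S c = m" "\<And>m'. m' < m \<Longrightarrow> \<not> (\<exists>c\<in>D. c \<noteq> 0 \<and> wt S c = m')"
    by blast
  then obtain c where c: "c \<in> D" "c \<noteq> 0" "wt S c = m" by blast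
  have cmin: "wt S x \<ge> m" if "x \<in> D" "x \<noteq> 0" for x
  proof (rule ccontr)
    assume "\<not> m \<le> wt S x"
    then have "wt S x < m" by simp
    from m(2)[OF this] that show False by blast
  qed
  have "m \<ge> d" using Suc.prems(3)[OF c(1,2)] c(3) by simp
  have "vec.independent {c}" using c(2) by (simp add: vec.independent_insert)
  then obtain B where B: "{c} \<subseteq> B" "B \<subseteq> D" "vec.independent B" "D \<subseteq> vec.span B"
    using vec.maximal_independent_subset_extend[of "{c}" D] c(1) by blast
  have cardB: "card B = vec.dim D" using vec.basis_card_eq_dim[OF B(2) B(4) B(3)] .
  have finB: "finite B" using B(3) vec.finiteI_independent by blast
  let ?D' = "vec.span (B - {c})"
  have indB': "vec.independent (B - {c})" using B(3) vec.independent_mono by blast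
  have dimD': "vec.dim ?D' = card B - 1"
    using vec.dim_span_eq_card_independent[OF indB'] B(1) finB by simp
  have cnot: "c \<notin> ?D'"
    using B(3) B(1) by (metis insert_Diff insert_subset vec.independent_insert Diff_iff singletonI)
  have D'sub: "?D' \<subseteq> D"
    using B(2) Suc.prems(1) by (meson Diff_subset order_trans vec.span_minimal)
  let ?S' = "{i\<in>S. c $ i = 0}"
  have IH: "card ?S' \<ge> griesmer k ((d + 1) div 2)"
  proof (rule Suc.IH)
    show "vec.subspace ?D'" by simp
    show "vec.dim ?D' \<ge> k" using dimD' cardB Suc.prems(2) by simp
    fix x assume x: "x \<in> ?D'" "x \<noteq> 0"
    have xD: "x \<in> D" using x D'sub by blast
    have "x \<noteq> c" using x cnot by blast
    then have "x + c \<noteq> 0" by (simp add: bitvec_add_eq_0)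
    moreover have "x + c \<in> D" using xD c(1) Suc.prems(1) vec.subspace_add by blast
    ultimately have "wt S (x + c) \<ge> m" using cmin by blast
    moreover have "wt S x \<ge> m" using cmin xD x(2) by blast
    ultimately have "2 * wt ?S' x \<ge> m" using split_wt[of S x c] c(3) by simp
    then show "wt ?S' x \<ge> (d + 1) div 2" using \<open>m \<ge> d\<close> by simp
  qed
  have "S = ?S' \<union> {i\<in>S. c $ i \<noteq> 0}" by auto
  then have "card S = card ?S' + wt S c"
    unfolding wt_def by (metis (no_types, lifting) card_Un_disjoint disjoint_iff finite mem_Collect_eq)
  then show ?case using IH c(3) \<open>m \<ge> d\<close> by simp
qed


lemma bit_mult_eq_1: "(a * b = (1::bit)) \<longleftrightarrow> a = 1 \<and> b = 1"
  by (cases a; cases b) simp_all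

definition inter :: "bit ^ 'n \<Rightarrow> bit ^ 'n \<Rightarrow> nat" where
  "inter x y = card {i. x $ i = 1 \<and> y $ i = 1}"

lemma bdot_inter:
  fixes x y :: "bit ^ 'n :: finite"
  shows "bdot x y = of_nat (inter x y)"
proof -
  have "bdot x y = of_nat (card {i\<in>UNIV. x $ i * y $ i = 1})"
    unfolding bdot_def by (rule bit_sum_card) simp
  also have "{i\<in>UNIV. x $ i * y $ i = 1} = {i. x $ i = 1 \<and> y $ i = 1}"
    by (simp add: bit_mult_eq_1)
  finally show ?thesis unfolding inter_def .
qed

lemma wt_inter_self: "wt UNIV x = inter x x"
  unfolding wt_def inter_def by simp

lemma wt_add:
  fixes x y :: "bit ^ 'n :: finite"
  shows "wt UNIV (x + y) + 2 * inter x y = wt UNIV x + wt UNIV y"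
proof -
  let ?P = "{i. x $ i = 1 \<and> y $ i = 0}"
  let ?Q = "{i. x $ i = 0 \<and> y $ i = 1}"
  let ?R = "{i. x $ i = 1 \<and> y $ i = 1}"
  have 1: "{i\<in>UNIV. x $ i \<noteq> 0} = ?P \<union> ?R" by auto
  have 2: "{i\<in>UNIV. (x + y) $ i \<noteq> 0} = ?P \<union> ?Q" by auto
  have 3: "{i\<in>UNIV. y $ i \<noteq> 0} = ?Q \<union> ?R" by auto
  have "card (?P \<union> ?R) = card ?P + card ?R" by (rule card_Un_disjoint) auto
  moreover have "card (?P \<union> ?Q) = card ?P + card ?Q" by (rule card_Un_disjoint) auto
  moreover have "card (?Q \<union> ?R) = card ?Q + card ?R" by (rule card_Un_disjoint) auto
  ultimately show ?thesis unfolding wt_def inter_def 1 2 3 by simp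
qed

lemma griesmer_6_36: "griesmer 6 36 = 73"
proof -
  have e: "(6::nat) = Suc (Suc (Suc (Suc (Suc (Suc 0)))))" by simp
  show ?thesis unfolding e by simp
qed

theorem proposition6p10:
  "\<not> (\<exists>C :: (bit ^ 72) set. is_nkd_code C 72 7 34 \<and> self_orthogonal C)"
proof
  assume "\<exists>C :: (bit ^ 72) set. is_nkd_code C 72 7 34 \<and> self_orthogonal C"
  then obtain C :: "(bit ^ 72) set" where sub: "vec.subspace C" and dimC: "vec.dim C = 7"
    and md: "min_dist C = 34" and so: "self_orthogonal C"
    unfolding is_nkd_code_def binary_linear_code_def by blast
  have orth: "bdot x y = 0" if "x \<in> C" "y \<in> C" for x y
    using so that unfolding self_orthogonal_def dual_code_def by blast
  have even_inter: "even (inter x y)" if "x \<in> C" "y \<in> C" for x y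
    using orth[OF that] by (simp add: bdot_inter bit_of_nat split: if_splits)
  have even_wt: "even (wt UNIV x)" if "x \<in> C" for x
    using even_inter[OF that that] by (simp add: wt_inter_self)
  have hd_le: "hamming_dist x y \<le> 72" for x y :: "bit ^ 72"
  proof -
    have "hamming_dist x y \<le> CARD(72)"
      unfolding hamming_dist_def by (rule card_mono) auto
    then show ?thesis by simp
  qed
  have fin: "finite {hamming_dist x y | x y. x \<in> C \<and> y \<in> C \<and> x \<noteq> y}"
    by (rule finite_subset[of _ "{..72::nat}"]) (use hd_le in auto)
  have w34: "wt UNIV x \<ge> 34" if "x \<in> C" "x \<noteq> 0" for x
  proof -
    have "hamming_dist x 0 \<in> {hamming_dist x y | x y. x \<in> C \<and> y \<in> C \<and> x \<noteq> y}"
      using that vec.subspace_0[OF sub] by blast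
    then have "min_dist C \<le> hamming_dist x 0" unfolding min_dist_def by (rule Min_le[OF fin])
    moreover have "hamming_dist x 0 = wt UNIV x" by (simp add: hamming_dist_def wt_def)
    ultimately show ?thesis using md by simp
  qed
  define D where "D = {x\<in>C. 4 dvd wt UNIV x}"
  have DC: "D \<subseteq> C" unfolding D_def by blast
  have add4: "4 dvd wt UNIV (x + y)" if "x \<in> C" "y \<in> C" "4 dvd wt UNIV x" "4 dvd wt UNIV y" for x y
  proof -
    have "even (inter x y)" using even_inter that by blast
    with wt_add[of x y] that(3,4) show ?thesis by presburger
  qed
  have D0: "0 \<in> D" unfolding D_def using vec.subspace_0[OF sub] by (simp add: wt_def)
  have subD: "vec.subspace D"
  proof (rule vec.subspaceI)
    show "0 \<in> D" by (rule D0)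
    fix x y assume "x \<in> D" "y \<in> D"
    then show "x + y \<in> D" unfolding D_def using add4 vec.subspace_add[OF sub] by blast
  next
    fix c :: bit and x assume "x \<in> D"
    then show "c *s x \<in> D"
      using D0 by (cases c) auto
  qed
  have w36: "wt UNIV x \<ge> 36" if "x \<in> D" "x \<noteq> 0" for x
  proof -
    have "wt UNIV x \<ge> 34" "4 dvd wt UNIV x" using that w34 DC unfolding D_def by auto
    then show ?thesis by presburger
  qed
  have dimD: "vec.dim D \<ge> 6"
  proof (cases "\<forall>x\<in>C. 4 dvd wt UNIV x")
    case True
    then have "D = C" unfolding D_def by blast
    then show ?thesis using dimC by simp
  next
    case False
    then obtain c where c: "c \<in> C" "\<not> 4 dvd wt UNIV c" by blast
    have "C \<subseteq> vec.span (insert c D)"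
    proof
      fix x assume x: "x \<in> C"
      show "x \<in> vec.span (insert c D)"
      proof (cases "x \<in> D")
        case True then show ?thesis by (simp add: vec.span_base)
      next
        case False
        then have nx: "\<not> 4 dvd wt UNIV x" using x unfolding D_def by blast
        have "even (inter x c)" "even (wt UNIV x)" "even (wt UNIV c)"
          using even_inter even_wt x c(1) by blast+
        with wt_add[of x c] nx c(2) have "4 dvd wt UNIV (x + c)" by presburger
        moreover have "x + c \<in> C" using vec.subspace_add[OF sub x c(1)] .
        ultimately have "x + c \<in> D" unfolding D_def by blast
        then have "(x + c) + c \<in> vec.span (insert c D)"
          by (intro vec.span_add vec.span_base) auto
        moreover have "(x + c) + c = x" by (simp add: add.assoc bitvec_add_self)
        ultimately show ?thesis by simp
      qed
    qed
    then have "vec.dim C \<le> vec.dim (vec.span (insert c D))" by (rule vec.dim_subset)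
    also have "\<dots> = vec.dim (insert c D)" by simp
    also have "\<dots> \<le> vec.dim D + 1" by (simp add: vec.dim_insert)
    finally show ?thesis using dimC by simp
  qed
  have "griesmer 6 36 \<le> card (UNIV :: 72 set)"
    by (rule griesmer_bound[OF subD dimD w36])
  then show False by (simp add: griesmer_6_36)
qed

end
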